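(* Let $(S,K,I)$ be an active split graph. If $\Phi(S)$ is simple and connected but not complete, then the factor graph $\Phi(\overline{S})$ of the split graph $(\overline{S},I,K)$ is complete but not simple.
   Context: All graphs are finite and simple. A split graph is a graph $S$ whose vertex set is a disjoint union $V(S)=K\,\dot\cup\,I$ with $K$ a clique and $I$ an independent set; $(K,I)$ is called a bipartition of $S$, and $(S,K,I)$ denotes $S$ together with this fixed bipartition. $\overline{S}$ is the complement of $S$; it is a split graph with clique $I$ and independent set $K$. A 2-switch in a graph $G$ is performed on four distinct vertices $a,b,c,d$ with $ab,cd\in E(G)$ and $ac,bd\notin E(G)$: it deletes $ab,cd$ and adds $ac,bd$; $a,b,c,d$ are said to participate in it. A vertex is active in $G$ if it participates in some 2-switch on $G$; $G$ is active if all its vertices are active. For a split graph $(S,K,I)$ and distinct $u,v\in I$, $\sigma_{uv}(S)$ is the number of induced subgraphs of $S$ isomorphic to $P_4$ containing both $u$ and $v$. The factor graph $\Phi(S)$ is the loopless multigraph with vertex set $I$ having exactly $\sigma_{uv}(S)$ parallel edges between $u$ and $v$; it is simple if $\sigma_{uv}(S)\in\{0,1\}$ for all $u,v$. Graph notions (connected, complete, etc.) applied to $\Phi(S)$ refer to its underlying simple graph, in which $u\sim v$ iff $\sigma_{uv}(S)\ge1$. *)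

theory Defs
  imports Main
begin

definition simple_graph :: "'a set \<Rightarrow> 'a set set \<Rightarrow> bool" where
  "simple_graph V E \<longleftrightarrow> finite V \<and>
     (\<forall>e\<in>E. \<exists>a b. a \<noteq> b \<and> a \<in> V \<and> b \<in> V \<and> e = {a, b})"

definition split_graph :: "'a set \<Rightarrow> 'a set set \<Rightarrow> 'a set \<Rightarrow> 'a set \<Rightarrow> bool" where
  "split_graph V E K I \<longleftrightarrow> simple_graph V E \<and> K \<inter> I = {} \<and> K \<union> I = V \<and>
     (\<forall>a\<in>K. \<forall>b\<in>K. a \<noteq> b \<longrightarrow> {a, b} \<in> E) \<and>
     (\<forall>a\<in>I. \<forall>b\<in>I. {a, b} \<notin> E)"

definition compl_edges :: "'a set \<Rightarrow> 'a set set \<Rightarrow> 'a set set" where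
  "compl_edges V E = {{a, b} | a b. a \<in> V \<and> b \<in> V \<and> a \<noteq> b \<and> {a, b} \<notin> E}"

definition two_switch :: "'a set \<Rightarrow> 'a set set \<Rightarrow> 'a \<Rightarrow> 'a \<Rightarrow> 'a \<Rightarrow> 'a \<Rightarrow> bool" where
  "two_switch V E a b c d \<longleftrightarrow> distinct [a, b, c, d] \<and> {a, b, c, d} \<subseteq> V \<and>
     {a, b} \<in> E \<and> {c, d} \<in> E \<and> {a, c} \<notin> E \<and> {b, d} \<notin> E"

definition active_vertex :: "'a set \<Rightarrow> 'a set set \<Rightarrow> 'a \<Rightarrow> bool" where
  "active_vertex V E x \<longleftrightarrow> (\<exists>a b c d. two_switch V E a b c d \<and> x \<in> {a, b, c, d})"

definition active_graph :: "'a set \<Rightarrow> 'a set set \<Rightarrow> bool" where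
  "active_graph V E \<longleftrightarrow> (\<forall>x\<in>V. active_vertex V E x)"

definition induces_P4 :: "'a set \<Rightarrow> 'a set set \<Rightarrow> 'a set \<Rightarrow> bool" where
  "induces_P4 V E X \<longleftrightarrow> X \<subseteq> V \<and> (\<exists>a b c d. distinct [a, b, c, d] \<and> X = {a, b, c, d} \<and>
     {e \<in> E. e \<subseteq> X} = {{a, b}, {b, c}, {c, d}})"

definition sigma :: "'a set \<Rightarrow> 'a set set \<Rightarrow> 'a \<Rightarrow> 'a \<Rightarrow> nat" where
  "sigma V E u v = card {X. induces_P4 V E X \<and> u \<in> X \<and> v \<in> X}"

definition factor_adj :: "'a set \<Rightarrow> 'a set set \<Rightarrow> 'a set \<Rightarrow> 'a \<Rightarrow> 'a \<Rightarrow> bool" where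
  "factor_adj V E I u v \<longleftrightarrow> u \<in> I \<and> v \<in> I \<and> u \<noteq> v \<and> sigma V E u v \<ge> 1"

definition factor_simple :: "'a set \<Rightarrow> 'a set set \<Rightarrow> 'a set \<Rightarrow> bool" where
  "factor_simple V E I \<longleftrightarrow> (\<forall>u\<in>I. \<forall>v\<in>I. u \<noteq> v \<longrightarrow> sigma V E u v \<le> 1)"

definition factor_complete :: "'a set \<Rightarrow> 'a set set \<Rightarrow> 'a set \<Rightarrow> bool" where
  "factor_complete V E I \<longleftrightarrow> (\<forall>u\<in>I. \<forall>v\<in>I. u \<noteq> v \<longrightarrow> factor_adj V E I u v)"

definition factor_connected :: "'a set \<Rightarrow> 'a set set \<Rightarrow> 'a set \<Rightarrow> bool" where
  "factor_connected V E I \<longleftrightarrow> I \<noteq> {} \<and>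
     (\<forall>u\<in>I. \<forall>v\<in>I. (factor_adj V E I)\<^sup>*\<^sup>* u v)"

end

theory Submission
  imports Defs
begin
lemma P4_sub: "induces_P4 V E X \<Longrightarrow> X \<subseteq> V"
  by (simp add: induces_P4_def)

lemma finS: "finite V \<Longrightarrow> finite {X. induces_P4 V E X \<and> u \<in> X \<and> v \<in> X}"
proof -
  assume f: "finite V"
  have "{X. induces_P4 V E X \<and> u \<in> X \<and> v \<in> X} \<subseteq> Pow V" using P4_sub by fast
  moreover have "finite (Pow V)" using f by simp
  ultimately show ?thesis by (rule finite_subset)
qed

lemma sigma_ge2:
  assumes "finite V" "induces_P4 V E A" "induces_P4 V E B" "A \<noteq> B" "u \<in> A" "v \<in> A" "u \<in> B" "v \<in> B"
  shows "sigma V E u v \<ge> 2"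
proof -
  let ?S = "{X. induces_P4 V E X \<and> u \<in> X \<and> v \<in> X}"
  have "finite ?S" using assms(1) by (rule finS)
  moreover have "{A,B} \<subseteq> ?S" using assms(2-8) by simp
  ultimately have "card {A,B} \<le> card ?S" by (rule card_mono)
  then show ?thesis using assms(4) unfolding sigma_def by simp
qed

lemma sigma_ge1:
  assumes "finite V" "induces_P4 V E A" "u \<in> A" "v \<in> A"
  shows "sigma V E u v \<ge> 1"
proof -
  let ?S = "{X. induces_P4 V E X \<and> u \<in> X \<and> v \<in> X}"
  have "finite ?S" using assms(1) by (rule finS)
  moreover have "A \<in> ?S" using assms(2-4) by simp
  ultimately have "card ?S \<noteq> 0" by (metis card_0_eq empty_iff)
  then show ?thesis unfolding sigma_def by simp
qed

lemma sigma_pos_P4: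
  assumes "sigma V E u v \<ge> 1"
  shows "\<exists>X. induces_P4 V E X \<and> u \<in> X \<and> v \<in> X"
proof (rule ccontr)
  assume "\<not> ?thesis"
  then have "{X. induces_P4 V E X \<and> u \<in> X \<and> v \<in> X} = {}" by blast
  then have "sigma V E u v = 0" unfolding sigma_def by (simp only: card.empty)
  then show False using assms by simp
qed
lemma P4_orig:
  assumes sg: "simple_graph V E" and "distinct [a,b,c,d]" "{a,b,c,d} \<subseteq> V"
    "{a,b} \<in> E" "{b,c} \<in> E" "{c,d} \<in> E" "{a,c} \<notin> E" "{b,d} \<notin> E" "{a,d} \<notin> E"
  shows "induces_P4 V E {a,b,c,d}"
proof -
  have "{e \<in> E. e \<subseteq> {a,b,c,d}} = {{a,b},{b,c},{c,d}}"
  proof (rule set_eqI, rule iffI)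
    fix e assume "e \<in> {e \<in> E. e \<subseteq> {a,b,c,d}}"
    then have eE: "e \<in> E" and sub: "e \<subseteq> {a,b,c,d}" by auto
    then obtain p q where "p \<noteq> q" "e = {p,q}" using sg unfolding simple_graph_def by blast
    then have pq: "p \<in> {a,b,c,d}" "q \<in> {a,b,c,d}" "{p,q} \<in> E" using sub eE by auto
    have "p=a \<or> p=b \<or> p=c \<or> p=d" "q=a \<or> q=b \<or> q=c \<or> q=d" using pq by auto
    then show "e \<in> {{a,b},{b,c},{c,d}}" using pq(3) \<open>p \<noteq> q\<close> \<open>e = {p,q}\<close> assms(7-9)
      by (elim disjE) (simp_all add: insert_commute)
  next
    fix e assume "e \<in> {{a,b},{b,c},{c,d}}"
    then show "e \<in> {e \<in> E. e \<subseteq> {a,b,c,d}}" using assms by auto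
  qed
  then show ?thesis unfolding induces_P4_def using assms(2,3) by blast
qed

lemma P4_compl:
  assumes "distinct [a,b,c,d]" "{a,b,c,d} \<subseteq> V"
    "{a,b} \<notin> E" "{b,c} \<notin> E" "{c,d} \<notin> E" "{a,c} \<in> E" "{b,d} \<in> E" "{a,d} \<in> E"
  shows "induces_P4 V (compl_edges V E) {a,b,c,d}"
proof -
  have "{e \<in> compl_edges V E. e \<subseteq> {a,b,c,d}} = {{a,b},{b,c},{c,d}}"
  proof (rule set_eqI, rule iffI)
    fix e assume "e \<in> {e \<in> compl_edges V E. e \<subseteq> {a,b,c,d}}"
    then obtain p q where "p \<noteq> q" "e = {p,q}" "{p,q} \<notin> E" and sub: "e \<subseteq> {a,b,c,d}"
      unfolding compl_edges_def by blast
    then have pq: "p \<in> {a,b,c,d}" "q \<in> {a,b,c,d}" "{p,q} \<notin> E" using sub by auto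
    have "p=a \<or> p=b \<or> p=c \<or> p=d" "q=a \<or> q=b \<or> q=c \<or> q=d" using pq by auto
    then show "e \<in> {{a,b},{b,c},{c,d}}" using pq(3) \<open>p \<noteq> q\<close> \<open>e = {p,q}\<close> assms(6-8)
      by (elim disjE) (simp_all add: insert_commute)
  next
    fix e assume "e \<in> {{a,b},{b,c},{c,d}}"
    then show "e \<in> {e \<in> compl_edges V E. e \<subseteq> {a,b,c,d}}" using assms
      unfolding compl_edges_def by auto
  qed
  then show ?thesis unfolding induces_P4_def using assms(1,2) by blast
qed

lemma split_facts:
  assumes "split_graph V E K I"
  shows "K \<inter> I = {}" "K \<union> I = V" "finite V"
    "\<And>x y. x \<in> I \<Longrightarrow> y \<in> I \<Longrightarrow> {x,y} \<notin> E"
    "\<And>x y. x \<in> K \<Longrightarrow> y \<in> K \<Longrightarrow> x \<noteq> y \<Longrightarrow> {x,y} \<in> E"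
  using assms by (simp_all add: split_graph_def simple_graph_def)

lemma P4_extract:
  assumes sp: "split_graph V E K I" and "u \<in> I" "v \<in> I" "u \<noteq> v" "induces_P4 V E X" "u \<in> X" "v \<in> X"
  shows "\<exists>p q. p \<in> K \<and> q \<in> K \<and> p \<noteq> q \<and> {u,p} \<in> E \<and> {v,q} \<in> E \<and> {u,q} \<notin> E \<and> {v,p} \<notin> E"
proof -
  obtain a b c d where dis: "distinct [a,b,c,d]" and X: "X = {a,b,c,d}" "X \<subseteq> V"
    and ed: "{e \<in> E. e \<subseteq> X} = {{a,b},{b,c},{c,d}}"
  proof -
    have "X \<subseteq> V \<and> (\<exists>a b c d. distinct [a, b, c, d] \<and> X = {a, b, c, d} \<and>
     {e \<in> E. e \<subseteq> X} = {{a, b}, {b, c}, {c, d}})" using assms(5) by (simp only: induces_P4_def)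
    then show ?thesis by (elim conjE exE) (rule that, assumption+)
  qed
  note ind = split_facts(4)[OF sp]
  note cl = split_facts(5)[OF sp]
  have KI: "\<And>x. x \<in> V \<Longrightarrow> x \<in> K \<longleftrightarrow> x \<notin> I" using split_facts(1,2)[OF sp] by blast
  have "{a,b} \<in> {e \<in> E. e \<subseteq> X}" "{b,c} \<in> {e \<in> E. e \<subseteq> X}" "{c,d} \<in> {e \<in> E. e \<subseteq> X}"
    unfolding ed by simp_all
  then have ab: "{a,b} \<in> E" and bc: "{b,c} \<in> E" and cd: "{c,d} \<in> E" by simp_all
  have nac: "{a,c} \<notin> E"
  proof
    assume "{a,c} \<in> E" then have "{a,c} \<in> {e \<in> E. e \<subseteq> X}" using X(1) by simp
    then have "{a,c} \<in> {{a,b},{b,c},{c,d}}" by (simp only: ed)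
    then show False using dis by (auto simp: doubleton_eq_iff)
  qed
  have nbd: "{b,d} \<notin> E"
  proof
    assume "{b,d} \<in> E" then have "{b,d} \<in> {e \<in> E. e \<subseteq> X}" using X(1) by simp
    then have "{b,d} \<in> {{a,b},{b,c},{c,d}}" by (simp only: ed)
    then show False using dis by (auto simp: doubleton_eq_iff)
  qed
  have nad: "{a,d} \<notin> E"
  proof
    assume "{a,d} \<in> E" then have "{a,d} \<in> {e \<in> E. e \<subseteq> X}" using X(1) by simp
    then have "{a,d} \<in> {{a,b},{b,c},{c,d}}" by (simp only: ed)
    then show False using dis by (auto simp: doubleton_eq_iff)
  qed
  have V: "a \<in> V" "b \<in> V" "c \<in> V" "d \<in> V" using X by auto
  have bK: "b \<in> K"
  proof (rule ccontr)
    assume "b \<notin> K" then have "b \<in> I" using KI V by blast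
    then have "a \<notin> I" "c \<notin> I" using ind ab bc by (metis insert_commute)+
    then have "a \<in> K" "c \<in> K" using KI V by blast+
    then show False using cl nac dis by auto
  qed
  have cK: "c \<in> K"
  proof (rule ccontr)
    assume "c \<notin> K" then have "c \<in> I" using KI V by blast
    then have "b \<notin> I" "d \<notin> I" using ind bc cd by (metis insert_commute)+
    then have "b \<in> K" "d \<in> K" using KI V by blast+
    then show False using cl nbd dis by auto
  qed
  have "u \<notin> K" "v \<notin> K" using split_facts(1)[OF sp] assms(2,3) by blast+
  then have "u \<noteq> b" "u \<noteq> c" "v \<noteq> b" "v \<noteq> c" using bK cK by auto
  then have "(u = a \<and> v = d) \<or> (u = d \<and> v = a)" using assms(4,6,7) X by auto
  then show ?thesis
  proof
    assume "u = a \<and> v = d"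
    moreover have "{d,c} \<in> E" "{d,b} \<notin> E" using cd nbd by (simp_all add: insert_commute)
    ultimately have "b \<in> K \<and> c \<in> K \<and> b \<noteq> c \<and> {u,b} \<in> E \<and> {v,c} \<in> E \<and> {u,c} \<notin> E \<and> {v,b} \<notin> E"
      using bK cK dis ab nac by auto
    then show ?thesis by blast
  next
    assume "u = d \<and> v = a"
    moreover have "{d,c} \<in> E" "{b,a} \<in> E" "{d,b} \<notin> E" "{c,a} \<notin> E" using cd nbd ab nac by (simp_all add: insert_commute)
    ultimately have "c \<in> K \<and> b \<in> K \<and> c \<noteq> b \<and> {u,c} \<in> E \<and> {v,b} \<in> E \<and> {u,b} \<notin> E \<and> {v,c} \<notin> E"
      using bK cK dis ab nac by auto
    then show ?thesis by blast
  qed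
qed


lemma switch_sides:
  assumes sp: "split_graph V E K I" and sw: "two_switch V E a b c d"
  shows "(a \<in> I \<longrightarrow> b \<in> K \<and> c \<in> K) \<and> (a \<in> K \<longrightarrow> b \<in> I \<and> c \<in> I)"
proof -
  have dis: "distinct [a,b,c,d]" and V: "a \<in> V" "b \<in> V" "c \<in> V" "d \<in> V"
    and ab: "{a,b} \<in> E" and cd: "{c,d} \<in> E" and nac: "{a,c} \<notin> E" and nbd: "{b,d} \<notin> E"
    using sw unfolding two_switch_def by simp_all
  note ind = split_facts(4)[OF sp]
  note cl = split_facts(5)[OF sp]
  have KI: "\<And>x. x \<in> V \<Longrightarrow> x \<in> K \<longleftrightarrow> x \<notin> I" using split_facts(1,2)[OF sp] by blast
  have 1: "b \<in> K \<and> c \<in> K" if aI: "a \<in> I"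
  proof -
    have bK: "b \<in> K" using ind[OF aI] ab KI V by blast
    have "c \<in> K"
    proof (rule ccontr)
      assume "c \<notin> K" then have cI: "c \<in> I" using KI V by blast
      then have "d \<in> K" using ind[OF cI] cd KI V by blast
      then show False using cl[OF bK] nbd dis by simp
    qed
    then show ?thesis using bK by simp
  qed
  have 2: "b \<in> I \<and> c \<in> I" if aK: "a \<in> K"
  proof -
    have cI: "c \<in> I" using cl[OF aK] nac dis KI V by auto
    have "b \<in> I"
    proof (rule ccontr)
      assume "b \<notin> I" then have bK: "b \<in> K" using KI V by blast
      then have "d \<in> I" using cl[OF bK] nbd KI V dis by auto
      then show False using ind[OF cI] cd by simp
    qed
    then show ?thesis using cI by simp
  qed
  show ?thesis using 1 2 by blast
qed

lemma switch_perm: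
  assumes "two_switch V E a b c d"
  shows "two_switch V E b a d c" "two_switch V E c d a b" "two_switch V E d c b a"
  using assms unfolding two_switch_def by (auto simp: insert_commute)

lemma switch_first:
  assumes sp: "split_graph V E K I" and sw: "two_switch V E a b c d"
  shows "\<exists>y z. {a,y} \<in> E \<and> {a,z} \<notin> E \<and> (a \<in> I \<longrightarrow> y \<in> K \<and> z \<in> K) \<and> (a \<in> K \<longrightarrow> y \<in> I \<and> z \<in> I)"
proof -
  have "{a,b} \<in> E" "{a,c} \<notin> E" using sw unfolding two_switch_def by simp_all
  then show ?thesis using switch_sides[OF sp sw] by blast
qed

lemma active_facts:
  assumes sp: "split_graph V E K I" and act: "active_graph V E" and x: "x \<in> V"
  shows "\<exists>y z. {x,y} \<in> E \<and> {x,z} \<notin> E \<and> (x \<in> I \<longrightarrow> y \<in> K \<and> z \<in> K) \<and> (x \<in> K \<longrightarrow> y \<in> I \<and> z \<in> I)"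
proof -
  obtain a b c d where sw: "two_switch V E a b c d" and xin: "x \<in> {a,b,c,d}"
    using act x unfolding active_graph_def active_vertex_def by blast
  have "x = a \<or> x = b \<or> x = c \<or> x = d" using xin by simp
  then show ?thesis
  proof (elim disjE)
    assume "x = a" then show ?thesis using switch_first[OF sp sw] by simp
  next
    assume "x = b" then show ?thesis using switch_first[OF sp switch_perm(1)[OF sw]] by simp
  next
    assume "x = c" then show ?thesis using switch_first[OF sp switch_perm(2)[OF sw]] by simp
  next
    assume "x = d" then show ?thesis using switch_first[OF sp switch_perm(3)[OF sw]] by simp
  qed
qed


definition nbr :: "'a set set \<Rightarrow> 'a set \<Rightarrow> 'a \<Rightarrow> 'a set" where
  "nbr E K u = {p \<in> K. {u,p} \<in> E}"

lemma diff_single: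
  assumes sp: "split_graph V E K I" and simp: "factor_simple V E I"
    and u: "u \<in> I" and v: "v \<in> I" and uv: "u \<noteq> v"
    and pq: "p \<in> K" "q \<in> K" "p \<noteq> q" "{u,p} \<in> E" "{v,q} \<in> E" "{u,q} \<notin> E" "{v,p} \<notin> E"
  shows "nbr E K u - nbr E K v = {p}"
proof -
  note ind = split_facts(4)[OF sp]
  note cl = split_facts(5)[OF sp]
  have fin: "finite V" using split_facts(3)[OF sp] .
  have KV: "K \<subseteq> V" "I \<subseteq> V" using split_facts(2)[OF sp] by blast+
  have dKI: "\<And>x y. x \<in> K \<Longrightarrow> y \<in> I \<Longrightarrow> x \<noteq> y" using split_facts(1)[OF sp] by blast
  have P4: "induces_P4 V E {u,p',q,v}" if p': "p' \<in> K" "{u,p'} \<in> E" "{v,p'} \<notin> E" for p'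
  proof (rule P4_orig)
    show "simple_graph V E" using sp unfolding split_graph_def by simp
    have "p' \<noteq> q" using p' pq by blast
    then show "distinct [u,p',q,v]" using dKI[OF p'(1) u] dKI[OF pq(2) u] dKI[OF p'(1) v] dKI[OF pq(2) v] uv by auto
    show "{u,p',q,v} \<subseteq> V" using u v p'(1) pq(2) KV by blast
    show "{u,p'} \<in> E" by fact
    show "{p',q} \<in> E" using cl[OF p'(1) pq(2) \<open>p' \<noteq> q\<close>] .
    show "{q,v} \<in> E" using pq(5) by (simp add: insert_commute)
    show "{u,q} \<notin> E" by fact
    show "{p',v} \<notin> E" using p'(3) by (simp add: insert_commute)
    show "{u,v} \<notin> E" using ind[OF u v] .
  qed
  have "p \<in> nbr E K u - nbr E K v" using pq unfolding nbr_def by simp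
  moreover have "p' = p" if p': "p' \<in> nbr E K u - nbr E K v" for p'
  proof (rule ccontr)
    assume ne: "p' \<noteq> p"
    have p'': "p' \<in> K" "{u,p'} \<in> E" "{v,p'} \<notin> E" using p' unfolding nbr_def by simp_all
    have "p' \<noteq> q" using p'' pq by blast
    then have "{u,p',q,v} \<noteq> {u,p,q,v}" using ne dKI[OF p''(1) u] dKI[OF p''(1) v] by auto
    then have "sigma V E u v \<ge> 2"
      using sigma_ge2[OF fin P4[OF p''] P4[OF pq(1,4,7)]] by simp
    moreover have "sigma V E u v \<le> 1" using simp u v uv unfolding factor_simple_def by blast
    ultimately show False by simp
  qed
  ultimately show ?thesis by blast
qed

lemma adj_card:
  assumes sp: "split_graph V E K I" and simp: "factor_simple V E I"
    and u: "u \<in> I" and v: "v \<in> I" and uv: "u \<noteq> v" and s: "sigma V E u v \<ge> 1"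
  shows "card (nbr E K u) = card (nbr E K v)"
proof -
  obtain X where "induces_P4 V E X" "u \<in> X" "v \<in> X" using sigma_pos_P4[OF s] by blast
  then obtain p q where pq: "p \<in> K" "q \<in> K" "p \<noteq> q" "{u,p} \<in> E" "{v,q} \<in> E" "{u,q} \<notin> E" "{v,p} \<notin> E"
    using P4_extract[OF sp u v uv] by blast
  have d1: "nbr E K u - nbr E K v = {p}" using diff_single[OF sp simp u v uv pq] .
  have d2: "nbr E K v - nbr E K u = {q}"
    using diff_single[OF sp simp v u uv[symmetric] pq(2,1) pq(3)[symmetric] pq(5,4,7,6)] .
  have finK: "finite K" using split_facts(2,3)[OF sp] by auto
  have fu: "finite (nbr E K u)" "finite (nbr E K v)" using finK unfolding nbr_def by simp_all
  have "card (nbr E K u) = card (nbr E K u - nbr E K v) + card (nbr E K u \<inter> nbr E K v)"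
    using fu by (metis card_Diff_subset_Int Diff_Diff_Int Diff_subset card_Diff_subset Int_commute
        add.commute card_mono le_add_diff_inverse inf_le1 finite_Int)
  moreover have "card (nbr E K v) = card (nbr E K v - nbr E K u) + card (nbr E K v \<inter> nbr E K u)"
    using fu by (metis card_Diff_subset_Int Diff_Diff_Int Diff_subset card_Diff_subset Int_commute
        add.commute card_mono le_add_diff_inverse inf_le1 finite_Int)
  ultimately show ?thesis using d1 d2 by (simp add: Int_commute)
qed


lemma rt_card:
  assumes sp: "split_graph V E K I" and simp: "factor_simple V E I"
    and r: "(factor_adj V E I)\<^sup>*\<^sup>* u v"
  shows "card (nbr E K u) = card (nbr E K v)"
  using r
proof (induction rule: rtranclp_induct)
  case base
  then show ?case by simp
next
  case (step y z)
  then have "y \<in> I" "z \<in> I" "y \<noteq> z" "sigma V E y z \<ge> 1" unfolding factor_adj_def by simp_all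
  then have "card (nbr E K y) = card (nbr E K z)" using adj_card[OF sp simp] by blast
  then show ?case using step.IH by simp
qed

theorem corollary5p4:
  fixes V :: "'a set" and E :: "'a set set" and K I :: "'a set"
  assumes "split_graph V E K I"
    and "active_graph V E"
    and "factor_simple V E I"
    and "factor_connected V E I"
    and "\<not> factor_complete V E I"
  shows "factor_complete V (compl_edges V E) K \<and> \<not> factor_simple V (compl_edges V E) K"
proof -
  note sp = assms(1)
  note ind = split_facts(4)[OF sp]
  note cl = split_facts(5)[OF sp]
  have fin: "finite V" using split_facts(3)[OF sp] .
  have KV: "K \<subseteq> V" "I \<subseteq> V" using split_facts(2)[OF sp] by blast+
  have finK: "finite K" using fin KV finite_subset by blast
  have dKI: "\<And>x y. x \<in> K \<Longrightarrow> y \<in> I \<Longrightarrow> x \<noteq> y" using split_facts(1)[OF sp] by blast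
  have KnI: "\<And>x. x \<in> K \<Longrightarrow> x \<notin> I" using split_facts(1)[OF sp] by blast
  have finN: "\<And>u. finite (nbr E K u)" using finK unfolding nbr_def by simp
  have cardeq: "card (nbr E K u) = card (nbr E K v)" if "u \<in> I" "v \<in> I" for u v
    using rt_card[OF sp assms(3)] assms(4) that unfolding factor_connected_def by blast
  have actK: "\<exists>u w. u \<in> I \<and> w \<in> I \<and> {u,x} \<in> E \<and> {w,x} \<notin> E" if x: "x \<in> K" for x
  proof -
    obtain y z where "{x,y} \<in> E" "{x,z} \<notin> E" "y \<in> I" "z \<in> I"
      using active_facts[OF sp assms(2)] x KV KnI by blast
    then show ?thesis by (metis insert_commute)
  qed
  have actI: "\<exists>p q. p \<in> K \<and> q \<in> K \<and> {u,p} \<in> E \<and> {u,q} \<notin> E" if u: "u \<in> I" for u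
    using active_facts[OF sp assms(2)] u KV KnI by blast
  have claim1: "\<exists>u \<in> I. {u,x} \<in> E \<and> {u,y} \<notin> E" if xy: "x \<in> K" "y \<in> K" "x \<noteq> y" for x y
  proof (rule ccontr)
    assume "\<not> ?thesis"
    then have H: "\<And>u. u \<in> I \<Longrightarrow> {u,x} \<in> E \<Longrightarrow> {u,y} \<in> E" by blast
    obtain u where u: "u \<in> I" "{u,x} \<in> E" using actK[OF xy(1)] by blast
    have uy: "{u,y} \<in> E" using H u by blast
    obtain w where w: "w \<in> I" "{w,y} \<notin> E" using actK[OF xy(2)] by blast
    have wx: "{w,x} \<notin> E" using H w by blast
    have uw: "u \<noteq> w" using u wx by blast
    have sub: "nbr E K w \<subseteq> nbr E K u"
    proof
      fix z assume "z \<in> nbr E K w"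
      then have z: "z \<in> K" "{w,z} \<in> E" unfolding nbr_def by simp_all
      show "z \<in> nbr E K u"
      proof (rule ccontr)
        assume "z \<notin> nbr E K u"
        then have uz: "{u,z} \<notin> E" using z unfolding nbr_def by simp
        have P4: "induces_P4 V E {u,t,z,w}" if t: "t \<in> K" "{u,t} \<in> E" "{w,t} \<notin> E" for t
        proof (rule P4_orig)
          show "simple_graph V E" using sp unfolding split_graph_def by simp
          have "t \<noteq> z" using t uz by blast
          then show "distinct [u,t,z,w]" using dKI[OF t(1) u(1)] dKI[OF z(1) u(1)] dKI[OF t(1) w(1)]
              dKI[OF z(1) w(1)] uw by auto
          show "{u,t,z,w} \<subseteq> V" using u(1) w(1) t(1) z(1) KV by blast
          show "{u,t} \<in> E" by fact
          show "{t,z} \<in> E" using cl[OF t(1) z(1) \<open>t \<noteq> z\<close>] .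
          show "{z,w} \<in> E" using z(2) by (simp add: insert_commute)
          show "{u,z} \<notin> E" by fact
          show "{t,w} \<notin> E" using t(3) by (simp add: insert_commute)
          show "{u,w} \<notin> E" using ind[OF u(1) w(1)] .
        qed
        have "y \<noteq> z" using uy uz by blast
        then have "{u,x,z,w} \<noteq> {u,y,z,w}" using xy(3) dKI[OF xy(2) u(1)] dKI[OF xy(2) w(1)] by auto
        then have "sigma V E u w \<ge> 2"
          using sigma_ge2[OF fin P4[OF xy(1) u(2) wx] P4[OF xy(2) uy w(2)]] by simp
        moreover have "sigma V E u w \<le> 1" using assms(3) u(1) w(1) uw unfolding factor_simple_def by blast
        ultimately show False by simp
      qed
    qed
    moreover have "x \<in> nbr E K u" "x \<notin> nbr E K w" using u wx xy(1) unfolding nbr_def by simp_all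
    ultimately have "nbr E K w \<subset> nbr E K u" by blast
    then have "card (nbr E K w) < card (nbr E K u)" using finN by (simp add: psubset_card_mono)
    then show False using cardeq[OF u(1) w(1)] by simp
  qed
  have P4c: "induces_P4 V (compl_edges V E) {x,w,u,y}"
    if "x \<in> K" "y \<in> K" "x \<noteq> y" "u \<in> I" "w \<in> I" "{u,x} \<in> E" "{u,y} \<notin> E" "{w,y} \<in> E" "{w,x} \<notin> E"
    for x y u w
  proof (rule P4_compl)
    have "u \<noteq> w" using that by blast
    then show "distinct [x,w,u,y]" using that dKI by auto
    show "{x,w,u,y} \<subseteq> V" using that KV by blast
    show "{x,w} \<notin> E" using that by (simp add: insert_commute)
    show "{w,u} \<notin> E" using ind that by blast
    show "{u,y} \<notin> E" using that by simp
    show "{x,u} \<in> E" using that by (simp add: insert_commute)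
    show "{w,y} \<in> E" using that by simp
    show "{x,y} \<in> E" using cl that by blast
  qed
  have part1: "factor_complete V (compl_edges V E) K"
    unfolding factor_complete_def factor_adj_def
  proof (intro ballI impI conjI)
    fix x y assume xy: "x \<in> K" "y \<in> K" "x \<noteq> y"
    obtain u where u: "u \<in> I" "{u,x} \<in> E" "{u,y} \<notin> E" using claim1[OF xy] by blast
    obtain w where w: "w \<in> I" "{w,y} \<in> E" "{w,x} \<notin> E" using claim1[OF xy(2,1) xy(3)[symmetric]] by blast
    show "1 \<le> sigma V (compl_edges V E) x y"
      using sigma_ge1[OF fin P4c[OF xy u(1) w(1) u(2,3) w(2,3)]] by simp
  qed (auto)
  obtain u0 v0 where uv: "u0 \<in> I" "v0 \<in> I" "u0 \<noteq> v0" "\<not> sigma V E u0 v0 \<ge> 1"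
    using assms(5) unfolding factor_complete_def factor_adj_def by blast
  have nest: "nbr E K u0 \<subseteq> nbr E K v0 \<or> nbr E K v0 \<subseteq> nbr E K u0"
  proof (rule ccontr)
    assume "\<not> ?thesis"
    then obtain p q where p: "p \<in> K" "{u0,p} \<in> E" "{v0,p} \<notin> E" and q: "q \<in> K" "{v0,q} \<in> E" "{u0,q} \<notin> E"
      unfolding nbr_def by blast
    have "induces_P4 V E {u0,p,q,v0}"
    proof (rule P4_orig)
      show "simple_graph V E" using sp unfolding split_graph_def by simp
      have "p \<noteq> q" using p q by blast
      then show "distinct [u0,p,q,v0]" using dKI p(1) q(1) uv by auto
      show "{u0,p,q,v0} \<subseteq> V" using uv p q KV by blast
      show "{u0,p} \<in> E" by fact
      show "{p,q} \<in> E" using cl p(1) q(1) \<open>p \<noteq> q\<close> by blast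
      show "{q,v0} \<in> E" using q(2) by (simp add: insert_commute)
      show "{u0,q} \<notin> E" by fact
      show "{p,v0} \<notin> E" using p(3) by (simp add: insert_commute)
      show "{u0,v0} \<notin> E" using ind uv by blast
    qed
    then have "sigma V E u0 v0 \<ge> 1" using sigma_ge1[OF fin] by simp
    then show False using uv(4) by simp
  qed
  have eqN: "nbr E K u0 = nbr E K v0"
    using nest cardeq[OF uv(1,2)] finN card_subset_eq by metis
  obtain x y where xy: "x \<in> K" "y \<in> K" "{u0,x} \<in> E" "{u0,y} \<notin> E" using actI[OF uv(1)] by blast
  have xny: "x \<noteq> y" using xy by blast
  have v0xy: "{v0,x} \<in> E" "{v0,y} \<notin> E" using eqN xy unfolding nbr_def by blast+
  obtain w where w: "w \<in> I" "{w,y} \<in> E" "{w,x} \<notin> E" using claim1[OF xy(2,1) xny[symmetric]] by blast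
  have A: "induces_P4 V (compl_edges V E) {x,w,u0,y}" using P4c[OF xy(1,2) xny uv(1) w(1) xy(3,4) w(2,3)] .
  have B: "induces_P4 V (compl_edges V E) {x,w,v0,y}" using P4c[OF xy(1,2) xny uv(2) w(1) v0xy w(2,3)] .
  have "v0 \<noteq> w" using v0xy w by blast
  moreover have "v0 \<noteq> x" "v0 \<noteq> y" using dKI xy(1,2) uv(2) by blast+
  ultimately have "v0 \<notin> {x,w,u0,y}" using uv(3) by simp
  then have "{x,w,u0,y} \<noteq> {x,w,v0,y}" by blast
  then have "sigma V (compl_edges V E) x y \<ge> 2" using sigma_ge2[OF fin A B] by simp
  then have "\<not> factor_simple V (compl_edges V E) K" using xy(1,2) xny unfolding factor_simple_def by fastforce
  then show ?thesis using part1 by simp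
qed

end
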